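(* Let $q_1=\dfrac{\rho\varepsilon}{1-\rho(1-\varepsilon)}$, $q_2=(1-\varepsilon)^{I-1}$, and let $\bar\varepsilon\in(0,1)$ be the unique value of $\varepsilon$ with $q_1=q_2$. If $\varepsilon\ge\bar\varepsilon$ then for every information tree $\mathcal T$: $C^p_{\mathcal T}(G)=\Omega$ if $p\le q_1$ and $C^p_{\mathcal T}(G)=\varnothing$ if $p>q_1$.
   Context: Model. Fix an integer $I\ge2$, agents $\mathcal I=\{1,\dots,I\}$, a prior $\rho\in(0,1)$ and a loss probability $\varepsilon\in(0,1)$. A state of nature $\theta\in\{g,b\}$ has $\Pr(\theta=g)=\rho$. A forest $F$ on $\mathcal I$ is a collection of vertex-disjoint undirected trees $T^1,\dots,T^R$ whose vertex sets partition $\mathcal I$; a seeding $s=(s^1,\dots,s^R)$ chooses exactly one vertex $s^r$ of each $T^r$. The pair $\mathcal T=(F,s)$ is an information tree: orient each $T^r$ away from $s^r$ and add a root $0$ (the planner) with an arc $0\to s^r$ for each $r$. If $\theta=b$ no messages are sent. If $\theta=g$ the planner sends a message along each arc $0\to s^r$, and every agent who receives a message forwards it along every arc leaving her. Each transmission along an arc is lost independently with probability $\varepsilon$. Agent $i$ observes only $x_i\in\{y,n\}$ (received / not). $\Omega=\{g,b\}\times\{y,n\}^I$, $\mathbb P_{\mathcal T}$ the induced probability. $G=\{\theta=g\}$, $Y_i=\{x_i=y\}$, $N_i=\Omega\setminus Y_i$, $Y^*=\bigcap_iY_i$. $B^p_i(E)=\{\omega:\mathbb P_{\mathcal T}[E\mid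 x_i=x_i(\omega)]\ge p\}$, $B^p(E)=\bigcap_iB^p_i(E)$, $B^{p,0}(E)=E$, $B^{p,\ell}(E)=B^p(B^{p,\ell-1}(E))$, $C^p_{\mathcal T}(E)=\bigcap_{\ell\ge1}B^{p,\ell}(E)$. *)

theory Defs
  imports Main "HOL-Library.FuncSet" Complex_Main
begin

text \<open>Agents are 1..I; vertex 0 is the planner.  An information tree (F,s) is represented
by the oriented structure it induces: every agent i has a unique parent par i (the tail of
the unique arc entering i), which is 0 exactly when i is a seed, and every agent is reached
from the root 0 by following parents.\<close>

definition info_tree :: "nat \<Rightarrow> (nat \<Rightarrow> nat) \<Rightarrow> bool" where
  "info_tree I par \<longleftrightarrow>
     (\<forall>i\<in>{1..I}. par i \<in> {0..I} \<and> (\<exists>k. (par ^^ k) i = 0))"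

text \<open>States: (theta, x) with theta = True meaning g, and x i = True meaning x_i = y.
Messages only exist for agents 1..I, so x is False outside {1..I}.\<close>

type_synonym state = "bool \<times> (nat \<Rightarrow> bool)"

definition Omega :: "nat \<Rightarrow> state set" where
  "Omega I = {(t, x). \<forall>i. i \<notin> {1..I} \<longrightarrow> \<not> x i}"

text \<open>Probability of an individual state: in state g each arc into agent i is
independently kept with probability 1-eps; i receives iff her parent received (the
planner always sends) and the arc is kept.  In state b nobody receives.\<close>

definition weight :: "nat \<Rightarrow> real \<Rightarrow> real \<Rightarrow> (nat \<Rightarrow> nat) \<Rightarrow> state \<Rightarrow> real" where
  "weight I rho eps par \<omega> =
     (case \<omega> of (t, x) \<Rightarrow>
        if t then rho * (\<Prod>i\<in>{1..I}.
                  (if par i = 0 \<or> x (par i)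
                   then (if x i then 1 - eps else eps)
                   else (if x i then 0 else 1)))
        else (1 - rho) * (if (\<forall>i\<in>{1..I}. \<not> x i) then 1 else 0))"

definition Pr :: "nat \<Rightarrow> real \<Rightarrow> real \<Rightarrow> (nat \<Rightarrow> nat) \<Rightarrow> state set \<Rightarrow> real" where
  "Pr I rho eps par E = (\<Sum>\<omega>\<in>E \<inter> Omega I. weight I rho eps par \<omega>)"

definition belief_i :: "nat \<Rightarrow> real \<Rightarrow> real \<Rightarrow> (nat \<Rightarrow> nat) \<Rightarrow> real \<Rightarrow> nat \<Rightarrow> state set \<Rightarrow> state set" where
  "belief_i I rho eps par p i E =
     {\<omega> \<in> Omega I.
        Pr I rho eps par (E \<inter> {\<omega>'. snd \<omega>' i = snd \<omega> i})
          / Pr I rho eps par {\<omega>'. snd \<omega>' i = snd \<omega> i} \<ge> p}"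

definition belief :: "nat \<Rightarrow> real \<Rightarrow> real \<Rightarrow> (nat \<Rightarrow> nat) \<Rightarrow> real \<Rightarrow> state set \<Rightarrow> state set" where
  "belief I rho eps par p E = Omega I \<inter> (\<Inter>i\<in>{1..I}. belief_i I rho eps par p i E)"

definition common_belief :: "nat \<Rightarrow> real \<Rightarrow> real \<Rightarrow> (nat \<Rightarrow> nat) \<Rightarrow> real \<Rightarrow> state set \<Rightarrow> state set" where
  "common_belief I rho eps par p E =
     (\<Inter>l\<in>{1..}. (belief I rho eps par p ^^ l) E)"

definition eventG :: "nat \<Rightarrow> state set" where
  "eventG I = {\<omega> \<in> Omega I. fst \<omega>}"

definition q1 :: "real \<Rightarrow> real \<Rightarrow> real" where
  "q1 rho eps = rho * eps / (1 - rho * (1 - eps))"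

definition q2 :: "nat \<Rightarrow> real \<Rightarrow> real" where
  "q2 I eps = (1 - eps) ^ (I - 1)"

end

theory Submission imports Defs begin

definition XS :: "nat set \<Rightarrow> (nat\<Rightarrow>bool) set" where
  "XS A = {x. \<forall>i. i \<notin> A \<longrightarrow> \<not> x i}"

definition fac :: "real \<Rightarrow> (nat\<Rightarrow>nat) \<Rightarrow> nat \<Rightarrow> (nat\<Rightarrow>bool) \<Rightarrow> real" where
  "fac eps par i x = (if par i = 0 \<or> x (par i)
                   then (if x i then 1 - eps else eps)
                   else (if x i then 0 else 1))"

definition WW :: "real \<Rightarrow> (nat\<Rightarrow>nat) \<Rightarrow> nat set \<Rightarrow> (nat\<Rightarrow>bool) \<Rightarrow> real" where
  "WW eps par A x = (\<Prod>i\<in>A. fac eps par i x)"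

lemma XS_eq: "XS A = (\<lambda>S i. i \<in> S) ` Pow A"
proof
  show "XS A \<subseteq> (\<lambda>S i. i \<in> S) ` Pow A"
  proof
    fix x assume "x \<in> XS A"
    hence "{i. x i} \<in> Pow A" "x = (\<lambda>i. i \<in> {i. x i})" by (auto simp: XS_def)
    thus "x \<in> (\<lambda>S i. i \<in> S) ` Pow A" by blast
  qed
qed (auto simp: XS_def)

lemma finite_XS: "finite A \<Longrightarrow> finite (XS A)"
  by (simp add: XS_eq)

lemma XS_empty: "XS {} = {\<lambda>_. False}"
  by (auto simp: XS_def)

lemma XS_insert:
  assumes "m \<notin> A"
  shows "XS (insert m A) = XS A \<union> (\<lambda>x. x(m:=True)) ` XS A"
    and "XS A \<inter> (\<lambda>x. x(m:=True)) ` XS A = {}"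
    and "inj_on (\<lambda>x. x(m:=True)) (XS A)"
proof -
  show "XS (insert m A) = XS A \<union> (\<lambda>x. x(m:=True)) ` XS A"
  proof
    show "XS (insert m A) \<subseteq> XS A \<union> (\<lambda>x. x(m:=True)) ` XS A"
    proof
      fix x assume x: "x \<in> XS (insert m A)"
      show "x \<in> XS A \<union> (\<lambda>x. x(m:=True)) ` XS A"
      proof (cases "x m")
        case True
        have "x(m:=False) \<in> XS A" using x by (auto simp: XS_def)
        moreover have "x = (x(m:=False))(m:=True)" using True by (simp add: fun_upd_idem)
        ultimately show ?thesis by blast
      next
        case False
        thus ?thesis using x by (auto simp: XS_def)
      qed
    qed
  qed (auto simp: XS_def)
  show "XS A \<inter> (\<lambda>x. x(m:=True)) ` XS A = {}" using assms by (auto simp: XS_def)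
  show "inj_on (\<lambda>x. x(m:=True)) (XS A)"
  proof (rule inj_onI)
    fix x y assume xy: "x \<in> XS A" "y \<in> XS A" and eq: "x(m:=True) = y(m:=True)"
    show "x = y"
    proof (rule ext)
      fix k show "x k = y k"
      proof (cases "k = m")
        case True thus ?thesis using xy assms by (simp add: XS_def)
      next
        case False thus ?thesis using fun_cong[OF eq, of k] by simp
      qed
    qed
  qed
qed

lemma sum_XS_insert:
  assumes "m \<notin> A" "finite A"
  shows "(\<Sum>x\<in>XS (insert m A). g x) = (\<Sum>x\<in>XS A. g x + g (x(m:=True)))"
proof -
  have "(\<Sum>x\<in>XS (insert m A). g x) = (\<Sum>x\<in>XS A. g x) + (\<Sum>x\<in>(\<lambda>x. x(m:=True)) ` XS A. g x)"
    using XS_insert[OF assms(1)] finite_XS[OF assms(2)]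
    by (simp add: sum.union_disjoint)
  also have "(\<Sum>x\<in>(\<lambda>x. x(m:=True)) ` XS A. g x) = (\<Sum>x\<in>XS A. g (x(m:=True)))"
    using XS_insert(3)[OF assms(1)] by (simp add: sum.reindex)
  finally show ?thesis by (simp add: sum.distrib)
qed


definition dep :: "(nat\<Rightarrow>nat) \<Rightarrow> nat \<Rightarrow> nat" where
  "dep par i = (LEAST k. (par ^^ k) i = 0)"

definition pclosed :: "nat \<Rightarrow> (nat\<Rightarrow>nat) \<Rightarrow> nat set \<Rightarrow> bool" where
  "pclosed I par A \<longleftrightarrow> A \<subseteq> {1..I} \<and> (\<forall>i\<in>A. par i = 0 \<or> par i \<in> A)"

locale tr =
  fixes I :: nat and rho eps :: real and par :: "nat \<Rightarrow> nat"
  assumes I1: "I \<ge> 1" and rho0: "0 < rho" and rho1: "rho < 1"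
    and eps0: "0 < eps" and eps1: "eps < 1" and tree: "info_tree I par"
begin

lemma par_range: "i \<in> {1..I} \<Longrightarrow> par i \<in> {0..I}"
  using tree unfolding info_tree_def by blast

lemma dep_ex: assumes "i \<in> {1..I}" shows "(par ^^ dep par i) i = 0"
proof -
  obtain k where "(par ^^ k) i = 0" using tree assms unfolding info_tree_def by blast
  thus ?thesis unfolding dep_def by (rule LeastI)
qed

lemma dep_par: assumes "i \<in> {1..I}" "par i \<noteq> 0" shows "dep par (par i) < dep par i"
proof -
  have d: "(par ^^ dep par i) i = 0" using dep_ex[OF assms(1)] .
  have "dep par i \<noteq> 0"
  proof
    assume "dep par i = 0"
    with d have "i = 0" by simp
    with assms(1) show False by simp
  qed
  then obtain n where n: "dep par i = Suc n" by (cases "dep par i") auto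
  have "(par ^^ n) (par i) = 0" using d n by (simp add: funpow_Suc_right del: funpow.simps)
  hence "dep par (par i) \<le> n" unfolding dep_def by (rule Least_le)
  thus ?thesis using n by simp
qed

lemma fac_nonneg: "0 \<le> fac eps par i x"
  using eps0 eps1 by (simp add: fac_def)

lemma WW_nonneg: "0 \<le> WW eps par A x"
  unfolding WW_def by (simp add: prod_nonneg fac_nonneg)

lemma leaf_step:
  assumes "pclosed I par A" "m \<in> A" "\<forall>c\<in>A. par c \<noteq> m"
  shows "(\<Sum>x\<in>XS A. WW eps par A x * h x) =
     (\<Sum>x\<in>XS (A - {m}). WW eps par (A - {m}) x *
         (fac eps par m x * h x + fac eps par m (x(m:=True)) * h (x(m:=True))))"
proof -
  have fin: "finite A" using assms(1) unfolding pclosed_def using finite_subset by blast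
  have A: "insert m (A - {m}) = A" using assms(2) by blast
  have W: "WW eps par A x = fac eps par m x * WW eps par (A - {m}) x" for x
    unfolding WW_def using fin assms(2) by (simp add: prod.remove)
  have W2: "WW eps par (A - {m}) (x(m:=True)) = WW eps par (A - {m}) x" for x
    unfolding WW_def
  proof (rule prod.cong)
    fix c assume c: "c \<in> A - {m}"
    hence "par c \<noteq> m" "c \<noteq> m" using assms(3) by auto
    thus "fac eps par c (x(m:=True)) = fac eps par c x" by (simp add: fac_def)
  qed simp
  have "(\<Sum>x\<in>XS A. WW eps par A x * h x) = (\<Sum>x\<in>XS (insert m (A - {m})). WW eps par A x * h x)"
    by (simp only: A)
  also have "\<dots> = (\<Sum>x\<in>XS (A - {m}). WW eps par A x * h x + WW eps par A (x(m:=True)) * h (x(m:=True)))"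
    using fin by (intro sum_XS_insert) auto
  also have "\<dots> = (\<Sum>x\<in>XS (A - {m}). WW eps par (A - {m}) x *
         (fac eps par m x * h x + fac eps par m (x(m:=True)) * h (x(m:=True))))"
    by (rule sum.cong) (auto simp: W W2 algebra_simps)
  finally show ?thesis .
qed

lemma fac_sum1:
  assumes "\<not> x m" "par m \<noteq> m"
  shows "fac eps par m x + fac eps par m (x(m:=True)) = 1"
  using assms by (simp add: fac_def)

lemma marg:
  assumes "pclosed I par A" "pclosed I par B" "B \<subseteq> A" "\<forall>x y. (\<forall>k\<in>B. x k = y k) \<longrightarrow> h x = h y"
  shows "(\<Sum>x\<in>XS A. WW eps par A x * h x) = (\<Sum>x\<in>XS B. WW eps par B x * h x)"
proof -
  have "\<forall>A. pclosed I par A \<and> B \<subseteq> A \<and> card (A - B) = n \<longrightarrow>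
     (\<Sum>x\<in>XS A. WW eps par A x * h x) = (\<Sum>x\<in>XS B. WW eps par B x * h x)" for n
  proof (induction n)
    case 0
    show ?case
    proof (intro allI impI)
      fix A assume H: "pclosed I par A \<and> B \<subseteq> A \<and> card (A - B) = 0"
      have "finite A" using H unfolding pclosed_def using finite_subset by blast
      hence "A - B = {}" using H by simp
      hence "A = B" using H by blast
      thus "(\<Sum>x\<in>XS A. WW eps par A x * h x) = (\<Sum>x\<in>XS B. WW eps par B x * h x)" by simp
    qed
  next
    case (Suc n)
    show ?case
    proof (intro allI impI)
      fix A assume H: "pclosed I par A \<and> B \<subseteq> A \<and> card (A - B) = Suc n"
      have finA: "finite A" using H unfolding pclosed_def using finite_subset by blast
      define S where "S = A - B"
      have finS: "finite S" "S \<noteq> {}" using finA H unfolding S_def by auto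
      define M where "M = Max (dep par ` S)"
      have "M \<in> dep par ` S" unfolding M_def using finS by simp
      then obtain m where m: "m \<in> S" "dep par m = M" by blast
      have mx: "\<forall>c\<in>S. dep par c \<le> dep par m" using m finS unfolding M_def by simp
      have AI: "A \<subseteq> {1..I}" using H unfolding pclosed_def by blast
      have m1: "m \<in> {1..I}" "m \<in> A" "m \<notin> B" using m AI unfolding S_def by auto
      have leaf: "\<forall>c\<in>A. par c \<noteq> m"
      proof (intro ballI notI)
        fix c assume c: "c \<in> A" "par c = m"
        have c1: "c \<in> {1..I}" using c AI by blast
        have "c \<notin> B"
        proof
          assume "c \<in> B"
          hence "par c = 0 \<or> par c \<in> B" using assms(2) unfolding pclosed_def by blast
          thus False using c m1 by auto
        qed
        hence "c \<in> S" using c unfolding S_def by blast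
        moreover have "dep par (par c) < dep par c" using dep_par[OF c1] c m1 by auto
        ultimately show False using mx c by force
      qed
      have pm: "par m \<noteq> m" using leaf m1 by blast
      have "(\<Sum>x\<in>XS A. WW eps par A x * h x) =
         (\<Sum>x\<in>XS (A - {m}). WW eps par (A - {m}) x *
           (fac eps par m x * h x + fac eps par m (x(m:=True)) * h (x(m:=True))))"
        using leaf_step[of A m h] H m1 leaf by blast
      also have "\<dots> = (\<Sum>x\<in>XS (A - {m}). WW eps par (A - {m}) x * h x)"
      proof (rule sum.cong)
        fix x assume x: "x \<in> XS (A - {m})"
        hence xm: "\<not> x m" unfolding XS_def by blast
        have "h (x(m:=True)) = h x" using assms(4) m1 by auto
        hence "fac eps par m x * h x + fac eps par m (x(m:=True)) * h (x(m:=True)) =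
              (fac eps par m x + fac eps par m (x(m:=True))) * h x" by (simp add: algebra_simps)
        also have "\<dots> = h x" using fac_sum1[of x m, OF xm pm] by simp
        finally show "WW eps par (A - {m}) x *
           (fac eps par m x * h x + fac eps par m (x(m:=True)) * h (x(m:=True))) =
           WW eps par (A - {m}) x * h x" by simp
      qed simp
      also have "\<dots> = (\<Sum>x\<in>XS B. WW eps par B x * h x)"
      proof -
        have "pclosed I par (A - {m})" using H leaf unfolding pclosed_def by auto
        moreover have "B \<subseteq> A - {m}" using H m1 by blast
        moreover have "card ((A - {m}) - B) = n"
        proof -
          have "(A - {m}) - B = S - {m}" unfolding S_def by blast
          thus ?thesis using H m finS unfolding S_def by simp
        qed
        ultimately show ?thesis using Suc.IH by blast
      qed
      finally show "(\<Sum>x\<in>XS A. WW eps par A x * h x) = (\<Sum>x\<in>XS B. WW eps par B x * h x)" .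
    qed
  qed
  thus ?thesis using assms by blast
qed

definition XX where "XX = XS {1..I}"
definition W where "W = WW eps par {1..I}"
definition SP :: "((nat\<Rightarrow>bool) \<Rightarrow> bool) \<Rightarrow> real" where
  "SP P = (\<Sum>x\<in>XX. if P x then W x else 0)"
definition Bs :: "nat \<Rightarrow> nat set" where "Bs i = {k\<in>{1..I}. dep par k < dep par i}"

lemma finXX: "finite XX" unfolding XX_def by (simp add: finite_XS)

lemma W_nonneg: "0 \<le> W x" unfolding W_def by (rule WW_nonneg)

lemma SP_nonneg: "0 \<le> SP P" unfolding SP_def by (rule sum_nonneg) (simp add: W_nonneg)

lemma SP_split: "SP P = SP (\<lambda>x. P x \<and> Q x) + SP (\<lambda>x. P x \<and> \<not> Q x)"
  unfolding SP_def sum.distrib[symmetric] by (rule sum.cong) auto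

lemma SP_mono: "(\<And>x. x \<in> XX \<Longrightarrow> P x \<Longrightarrow> Q x) \<Longrightarrow> SP P \<le> SP Q"
  unfolding SP_def by (rule sum_mono) (auto simp: W_nonneg)

lemma SP_cong: "(\<And>x. x \<in> XX \<Longrightarrow> P x = Q x) \<Longrightarrow> SP P = SP Q"
  unfolding SP_def by (rule sum.cong) auto

lemma pclosed_U: "pclosed I par {1..I}"
  unfolding pclosed_def using par_range by auto

lemma pclosed_empty: "pclosed I par {}"
  unfolding pclosed_def by auto

lemma tot: assumes "pclosed I par A" shows "(\<Sum>x\<in>XS A. WW eps par A x) = 1"
proof -
  have "(\<Sum>x\<in>XS A. WW eps par A x) = (\<Sum>x\<in>XS A. WW eps par A x * 1)" by simp
  also have "\<dots> = (\<Sum>x\<in>XS {}. WW eps par {} x * 1)"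
    by (rule marg) (use assms pclosed_empty in auto)
  also have "\<dots> = 1" by (simp add: XS_empty WW_def)
  finally show ?thesis .
qed

lemma SP_tot: "SP (\<lambda>_. True) = 1"
  unfolding SP_def XX_def W_def using tot[OF pclosed_U] by simp

lemma Bs_closed: assumes "i \<in> {1..I}" shows "pclosed I par (Bs i)"
  unfolding pclosed_def Bs_def
proof (intro conjI ballI)
  fix k assume k: "k \<in> {k \<in> {1..I}. dep par k < dep par i}"
  show "par k = 0 \<or> par k \<in> {k \<in> {1..I}. dep par k < dep par i}"
  proof (cases "par k = 0")
    case False
    hence "par k \<in> {1..I}" using par_range[of k] k by auto
    moreover have "dep par (par k) < dep par k" using dep_par[of k] k False by auto
    ultimately show ?thesis using k by auto
  qed simp
qed auto

lemma Cs_closed: assumes "i \<in> {1..I}" shows "pclosed I par (insert i (Bs i))"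
proof -
  have "par i = 0 \<or> par i \<in> Bs i"
  proof (cases "par i = 0")
    case False
    hence "par i \<in> {1..I}" using par_range[of i] assms by auto
    thus ?thesis using dep_par[OF assms False] unfolding Bs_def by auto
  qed simp
  thus ?thesis using Bs_closed[OF assms] assms unfolding pclosed_def by auto
qed

lemma i_notin_Bs: "i \<notin> Bs i" unfolding Bs_def by auto

lemma Cs_leaf: assumes "i \<in> {1..I}" shows "\<forall>c\<in>insert i (Bs i). par c \<noteq> i"
proof (intro ballI notI)
  fix c assume c: "c \<in> insert i (Bs i)" "par c = i"
  have c1: "c \<in> {1..I}" using c assms unfolding Bs_def by auto
  have "par c \<noteq> 0" using c assms by auto
  hence "dep par i < dep par c" using dep_par[OF c1] c by simp
  thus False using c unfolding Bs_def by auto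
qed

lemma keyK:
  assumes i: "i \<in> {1..I}" and h: "\<forall>x y. (\<forall>k\<in>Bs i. x k = y k) \<longrightarrow> h x = h y"
  shows "(\<Sum>x\<in>XX. W x * (if x i = v then h x else 0)) =
         (\<Sum>x\<in>XS (Bs i). WW eps par (Bs i) x * (fac eps par i (x(i:=v)) * h x))"
proof -
  let ?h = "\<lambda>x. if x i = v then h x else 0"
  have "(\<Sum>x\<in>XX. W x * ?h x) = (\<Sum>x\<in>XS (insert i (Bs i)). WW eps par (insert i (Bs i)) x * ?h x)"
    unfolding XX_def W_def
    by (rule marg) (use pclosed_U Cs_closed[OF i] i h in \<open>auto simp: Bs_def\<close>)
  also have "\<dots> = (\<Sum>x\<in>XS (insert i (Bs i) - {i}). WW eps par (insert i (Bs i) - {i}) x *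
         (fac eps par i x * ?h x + fac eps par i (x(i:=True)) * ?h (x(i:=True))))"
    by (rule leaf_step) (use Cs_closed[OF i] Cs_leaf[OF i] in auto)
  also have "insert i (Bs i) - {i} = Bs i" using i_notin_Bs by auto
  also have "(\<Sum>x\<in>XS (Bs i). WW eps par (Bs i) x *
         (fac eps par i x * ?h x + fac eps par i (x(i:=True)) * ?h (x(i:=True)))) =
      (\<Sum>x\<in>XS (Bs i). WW eps par (Bs i) x * (fac eps par i (x(i:=v)) * h x))"
  proof (rule sum.cong)
    fix x assume x: "x \<in> XS (Bs i)"
    hence xi: "\<not> x i" using i_notin_Bs unfolding XS_def by blast
    have hx: "h (x(i:=True)) = h x" using h i_notin_Bs by auto
    have xf: "x(i:=False) = x" using xi by (simp add: fun_upd_idem)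
    show "WW eps par (Bs i) x * (fac eps par i x * ?h x + fac eps par i (x(i:=True)) * ?h (x(i:=True))) =
      WW eps par (Bs i) x * (fac eps par i (x(i:=v)) * h x)"
      using xi hx xf by (cases v) auto
  qed simp
  finally show ?thesis .
qed

lemma margB:
  assumes i: "i \<in> {1..I}" and h: "\<forall>x y. (\<forall>k\<in>Bs i. x k = y k) \<longrightarrow> h x = h y"
  shows "(\<Sum>x\<in>XX. W x * h x) = (\<Sum>x\<in>XS (Bs i). WW eps par (Bs i) x * h x)"
  unfolding XX_def W_def
  by (rule marg) (use pclosed_U Bs_closed[OF i] i h in \<open>auto simp: Bs_def\<close>)

lemma SP_as: "SP P = (\<Sum>x\<in>XX. W x * (if P x then 1 else 0))"
  unfolding SP_def by (rule sum.cong) auto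

lemma SP_Y: assumes i: "i \<in> {1..I}"
  shows "SP (\<lambda>x. x i) \<le> 1 - eps" and "par i = 0 \<Longrightarrow> SP (\<lambda>x. x i) = 1 - eps"
proof -
  have "SP (\<lambda>x. x i) = (\<Sum>x\<in>XX. W x * (if x i = True then 1 else 0))" unfolding SP_as by simp
  also have "\<dots> = (\<Sum>x\<in>XS (Bs i). WW eps par (Bs i) x * (fac eps par i (x(i:=True)) * 1))"
    by (rule keyK[OF i]) auto
  finally have eq: "SP (\<lambda>x. x i) = (\<Sum>x\<in>XS (Bs i). WW eps par (Bs i) x * fac eps par i (x(i:=True)))"
    by simp
  have t: "(\<Sum>x\<in>XS (Bs i). WW eps par (Bs i) x) = 1" by (rule tot[OF Bs_closed[OF i]])
  have "(\<Sum>x\<in>XS (Bs i). WW eps par (Bs i) x * fac eps par i (x(i:=True))) \<le>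
        (\<Sum>x\<in>XS (Bs i). WW eps par (Bs i) x * (1 - eps))"
    by (rule sum_mono, rule mult_left_mono) (use eps0 eps1 in \<open>auto simp: fac_def WW_nonneg\<close>)
  also have "\<dots> = 1 - eps" using t by (simp add: sum_distrib_right[symmetric])
  finally show "SP (\<lambda>x. x i) \<le> 1 - eps" using eq by simp
  assume p: "par i = 0"
  have "(\<Sum>x\<in>XS (Bs i). WW eps par (Bs i) x * fac eps par i (x(i:=True))) =
        (\<Sum>x\<in>XS (Bs i). WW eps par (Bs i) x * (1 - eps))"
    by (rule sum.cong) (auto simp: fac_def p)
  also have "\<dots> = 1 - eps" using t by (simp add: sum_distrib_right[symmetric])
  finally show "SP (\<lambda>x. x i) = 1 - eps" using eq by simp
qed

lemma SP_child: assumes i: "i \<in> {1..I}" and p: "par i \<noteq> 0"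
  shows "SP (\<lambda>x. x (par i) \<and> \<not> x i) = eps * SP (\<lambda>x. x (par i))"
proof -
  let ?j = "par i"
  have jB: "?j \<in> Bs i" using dep_par[OF i p] par_range[OF i] p unfolding Bs_def by auto
  have ji: "?j \<noteq> i" using jB i_notin_Bs by auto
  have hdep: "\<forall>x y. (\<forall>k\<in>Bs i. x k = y k) \<longrightarrow> (if x ?j then 1 else 0) = (if y ?j then (1::real) else 0)"
    using jB by auto
  have "SP (\<lambda>x. x ?j \<and> \<not> x i) = (\<Sum>x\<in>XX. W x * (if x i = False then (if x ?j then 1 else 0) else 0))"
    unfolding SP_as by (rule sum.cong) auto
  also have "\<dots> = (\<Sum>x\<in>XS (Bs i). WW eps par (Bs i) x * (fac eps par i (x(i:=False)) * (if x ?j then 1 else 0)))"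
    by (rule keyK[OF i hdep])
  also have "\<dots> = (\<Sum>x\<in>XS (Bs i). WW eps par (Bs i) x * (eps * (if x ?j then 1 else 0)))"
    by (rule sum.cong) (auto simp: fac_def p ji)
  also have "\<dots> = eps * (\<Sum>x\<in>XS (Bs i). WW eps par (Bs i) x * (if x ?j then 1 else 0))"
    by (simp add: sum_distrib_left algebra_simps)
  also have "(\<Sum>x\<in>XS (Bs i). WW eps par (Bs i) x * (if x ?j then 1 else 0)) =
     (\<Sum>x\<in>XX. W x * (if x ?j then 1 else 0))"
    by (rule margB[OF i hdep, symmetric])
  also have "\<dots> = SP (\<lambda>x. x ?j)" unfolding SP_as by simp
  finally show ?thesis .
qed

lemma W_zero: assumes "i \<in> {1..I}" "par i \<noteq> 0" "x i" "\<not> x (par i)" shows "W x = 0"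
proof -
  have "fac eps par i x = 0" using assms by (simp add: fac_def)
  thus ?thesis unfolding W_def WW_def using assms(1) by (metis finite_atLeastAtMost prod_zero)
qed

lemma SP_child0: assumes i: "i \<in> {1..I}" and p: "par i \<noteq> 0"
  shows "SP (\<lambda>x. x i \<and> \<not> x (par i)) = 0"
  unfolding SP_def by (rule sum.neutral) (use W_zero[OF i p] in auto)

definition xall :: "nat \<Rightarrow> bool" where "xall = (\<lambda>k. k \<in> {1..I})"

lemma xall_XX: "xall \<in> XX" unfolding XX_def XS_def xall_def by auto

lemma W_xall: "W xall = (1 - eps) ^ I"
proof -
  have "W xall = (\<Prod>i\<in>{1..I}. 1 - eps)" unfolding W_def WW_def
  proof (rule prod.cong)
    fix i assume i: "i \<in> {1..I}"
    show "fac eps par i xall = 1 - eps" using par_range[OF i] i by (auto simp: fac_def xall_def)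
  qed simp
  thus ?thesis by simp
qed

lemma SP_le_xall: assumes "\<And>x. x \<in> XX \<Longrightarrow> P x \<Longrightarrow> x = xall" shows "SP P \<le> (1 - eps) ^ I"
proof -
  have "SP P \<le> (\<Sum>x\<in>XX. if x = xall then W x else 0)"
    unfolding SP_def
  proof (rule sum_mono)
    fix x assume x: "x \<in> XX"
    show "(if P x then W x else 0) \<le> (if x = xall then W x else 0)"
    proof (cases "P x")
      case True
      hence "x = xall" using assms x by blast
      thus ?thesis using True by simp
    qed (simp add: W_nonneg)
  qed
  also have "\<dots> = W xall" using finXX xall_XX by (simp add: sum.delta')
  finally show ?thesis using W_xall by simp
qed

lemma SP_ge_xall: assumes "P xall" shows "SP P \<ge> (1 - eps) ^ I"
proof -
  have "W xall \<le> SP P" unfolding SP_def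
    using member_le_sum[of xall XX "\<lambda>x. if P x then W x else 0"] finXX xall_XX assms
    by (simp add: W_nonneg)
  thus ?thesis using W_xall by simp
qed

lemma Omega_eq: "Omega I = {(t,x). x \<in> XX}"
  by (auto simp: Omega_def XX_def XS_def)

lemma weight_T: "weight I rho eps par (True, x) = rho * W x"
  by (simp add: weight_def W_def WW_def fac_def)

lemma weight_F: "x \<in> XX \<Longrightarrow> weight I rho eps par (False, x) = (if x = (\<lambda>_. False) then 1 - rho else 0)"
  by (auto simp: weight_def XX_def XS_def fun_eq_iff)

lemma Pr_eq: "Pr I rho eps par E = rho * SP (\<lambda>x. (True,x) \<in> E) + (if (False, \<lambda>_. False) \<in> E then 1 - rho else 0)"
proof -
  define S1 where "S1 = {x\<in>XX. (True,x)\<in>E}"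
  define S2 where "S2 = {x\<in>XX. (False,x)\<in>E}"
  have sp: "E \<inter> Omega I = Pair True ` S1 \<union> Pair False ` S2"
  proof (intro equalityI subsetI)
    fix w assume "w \<in> E \<inter> Omega I"
    then obtain t x where w: "w = (t,x)" "x \<in> XX" "(t,x) \<in> E" unfolding Omega_eq by auto
    thus "w \<in> Pair True ` S1 \<union> Pair False ` S2" unfolding S1_def S2_def by (cases t) auto
  qed (auto simp: S1_def S2_def Omega_eq)
  have f1: "finite S1" "finite S2" using finXX unfolding S1_def S2_def by auto
  have "Pr I rho eps par E = (\<Sum>w\<in>Pair True ` S1. weight I rho eps par w) + (\<Sum>w\<in>Pair False ` S2. weight I rho eps par w)"
    unfolding Pr_def sp by (rule sum.union_disjoint) (use f1 in auto)
  also have "(\<Sum>w\<in>Pair True ` S1. weight I rho eps par w) = (\<Sum>x\<in>S1. rho * W x)"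
    by (subst sum.reindex) (auto simp: inj_on_def weight_T)
  also have "\<dots> = rho * SP (\<lambda>x. (True,x) \<in> E)"
    unfolding SP_def S1_def sum_distrib_left[symmetric] using finXX by (simp add: sum.inter_filter)
  also have "(\<Sum>w\<in>Pair False ` S2. weight I rho eps par w) = (\<Sum>x\<in>S2. if x = (\<lambda>_. False) then 1 - rho else 0)"
    by (subst sum.reindex) (auto simp: inj_on_def weight_F S2_def intro!: sum.cong)
  also have "\<dots> = (if (\<lambda>_. False) \<in> S2 then 1 - rho else 0)"
    using f1 by (simp add: sum.delta')
  also have "(\<lambda>_. False) \<in> S2 \<longleftrightarrow> (False, \<lambda>_. False) \<in> E"
    unfolding S2_def XX_def XS_def by auto
  finally show ?thesis .
qed

lemma Pr_C: "Pr I rho eps par {w. snd w i = v} = rho * SP (\<lambda>x. x i = v) + (if v then 0 else 1 - rho)"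
  unfolding Pr_eq by auto

lemma Pr_EC: "Pr I rho eps par (E \<inter> {w. snd w i = v}) =
   rho * SP (\<lambda>x. (True,x) \<in> E \<and> x i = v) + (if (False, \<lambda>_. False) \<in> E \<and> \<not> v then 1 - rho else 0)"
  unfolding Pr_eq by auto

lemma SP_N: "i \<in> {1..I} \<Longrightarrow> SP (\<lambda>x. \<not> x i) = 1 - SP (\<lambda>x. x i)"
  using SP_split[of "\<lambda>_. True" "\<lambda>x. x i"] SP_tot by simp

lemma SP_Ypos: "i \<in> {1..I} \<Longrightarrow> SP (\<lambda>x. x i) > 0"
proof -
  assume "i \<in> {1..I}"
  hence "SP (\<lambda>x. x i) \<ge> (1 - eps) ^ I" by (intro SP_ge_xall) (simp add: xall_def)
  moreover have "(1 - eps) ^ I > 0" using eps1 by simp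
  ultimately show ?thesis by linarith
qed

lemma den_pos: "1 - rho * (1 - eps) > 0"
proof -
  have "rho * (1 - eps) \<le> rho * 1" using rho0 eps0 by (intro mult_left_mono) auto
  thus ?thesis using rho1 by simp
qed

lemma q1_le1: "q1 rho eps \<le> 1"
proof -
  have d: "1 - rho * (1 - eps) > 0" by (rule den_pos)
  have "rho * eps \<le> 1 - rho * (1 - eps)" using rho1 by (simp add: algebra_simps)
  thus ?thesis unfolding q1_def using d by simp
qed

lemma arith1: assumes "eps \<le> s" shows "rho * eps / (1 - rho * (1 - eps)) \<le> rho * s / (rho * s + (1 - rho))"
proof -
  have d1: "1 - rho * (1 - eps) > 0" by (rule den_pos)
  have d2: "rho * s + (1 - rho) > 0" using rho0 rho1 eps0 assms
    by (smt (verit) mult_pos_pos)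
  have "rho * eps * (rho * s + (1 - rho)) \<le> rho * s * (1 - rho * (1 - eps))"
  proof -
    have "rho * eps * (rho * s + (1 - rho)) - rho * s * (1 - rho * (1 - eps)) = rho * (1 - rho) * (eps - s)"
      by (simp add: algebra_simps)
    also have "\<dots> \<le> 0" using rho0 rho1 assms by (intro mult_nonneg_nonpos) auto
    finally show ?thesis by simp
  qed
  thus ?thesis using d1 d2 by (simp add: divide_simps)
qed

lemma arith2: assumes "0 \<le> a" "a \<le> 1"
  shows "rho * eps * a / (1 - rho * (1 - eps) * a) \<le> rho * eps / (1 - rho * (1 - eps))"
proof -
  have d1: "1 - rho * (1 - eps) > 0" by (rule den_pos)
  have "rho * (1 - eps) * a \<le> rho * (1 - eps)" using assms rho0 eps1 by (simp add: mult_left_le)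
  hence d2: "1 - rho * (1 - eps) * a > 0" using d1 by linarith
  have "rho * eps * a * (1 - rho * (1 - eps)) \<le> rho * eps * (1 - rho * (1 - eps) * a)"
  proof -
    have "rho * eps * a * (1 - rho * (1 - eps)) - rho * eps * (1 - rho * (1 - eps) * a) = rho * eps * (a - 1)"
      by (simp add: algebra_simps)
    also have "\<dots> \<le> 0" using rho0 eps0 assms by (intro mult_nonneg_nonpos) auto
    finally show ?thesis by simp
  qed
  thus ?thesis using d1 d2 by (simp add: divide_simps)
qed

lemma D1:
  assumes p: "p \<le> q1 rho eps" and E: "eventG I \<subseteq> E"
  shows "belief I rho eps par p E = Omega I"
proof -
  have "Omega I \<subseteq> belief_i I rho eps par p i E" if i: "i \<in> {1..I}" for i
  proof
    fix w assume w: "w \<in> Omega I"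
    define v where "v = snd w i"
    have T: "(True, x) \<in> E" if "x \<in> XX" for x
      using E that unfolding eventG_def Omega_eq by auto
    have num: "Pr I rho eps par (E \<inter> {w'. snd w' i = v}) \<ge> rho * SP (\<lambda>x. x i = v)"
    proof -
      have "SP (\<lambda>x. (True,x) \<in> E \<and> x i = v) = SP (\<lambda>x. x i = v)" by (rule SP_cong) (use T in auto)
      thus ?thesis unfolding Pr_EC using rho1 by auto
    qed
    have "p \<le> Pr I rho eps par (E \<inter> {w'. snd w' i = v}) / Pr I rho eps par {w'. snd w' i = v}"
    proof (cases v)
      case True
      have s: "SP (\<lambda>x. x i = v) > 0" using SP_Ypos[OF i] True by simp
      have den: "Pr I rho eps par {w'. snd w' i = v} = rho * SP (\<lambda>x. x i = v)"
        unfolding Pr_C using True by simp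
      have dp: "rho * SP (\<lambda>x. x i = v) > 0" using s rho0 by simp
      have "1 \<le> Pr I rho eps par (E \<inter> {w'. snd w' i = v}) / Pr I rho eps par {w'. snd w' i = v}"
        unfolding den using num dp by simp
      thus ?thesis using p q1_le1 by linarith
    next
      case False
      have sv: "SP (\<lambda>x. x i = v) = 1 - SP (\<lambda>x. x i)" using SP_N[OF i] False by simp
      hence s: "eps \<le> SP (\<lambda>x. x i = v)" using SP_Y(1)[OF i] by simp
      have den: "Pr I rho eps par {w'. snd w' i = v} = rho * SP (\<lambda>x. x i = v) + (1 - rho)"
        unfolding Pr_C using False by simp
      have dp: "rho * SP (\<lambda>x. x i = v) + (1 - rho) > 0" using rho0 rho1 s eps0
        by (smt (verit) mult_pos_pos)
      have "rho * SP (\<lambda>x. x i = v) / (rho * SP (\<lambda>x. x i = v) + (1 - rho)) \<le>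
            Pr I rho eps par (E \<inter> {w'. snd w' i = v}) / Pr I rho eps par {w'. snd w' i = v}"
        unfolding den using num dp by (simp add: divide_right_mono)
      moreover have "q1 rho eps \<le> rho * SP (\<lambda>x. x i = v) / (rho * SP (\<lambda>x. x i = v) + (1 - rho))"
        unfolding q1_def by (rule arith1[OF s])
      ultimately show ?thesis using p by linarith
    qed
    thus "w \<in> belief_i I rho eps par p i E" unfolding belief_i_def v_def using w by simp
  qed
  thus ?thesis unfolding belief_def by blast
qed

lemma Da:
  assumes p: "q1 rho eps < p" and i: "i \<in> {1..I}" and pi: "par i = 0"
    and E: "(False, \<lambda>_. False) \<notin> E" and w: "w \<in> belief_i I rho eps par p i E"
  shows "snd w i"
proof (rule ccontr)
  assume "\<not> snd w i"
  hence b: "p \<le> Pr I rho eps par (E \<inter> {w'. snd w' i = False}) / Pr I rho eps par {w'. snd w' i = False}"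
    using w unfolding belief_i_def by auto
  have sN: "SP (\<lambda>x. x i = False) = eps" using SP_N[OF i] SP_Y(2)[OF i pi] by simp
  have num: "Pr I rho eps par (E \<inter> {w'. snd w' i = False}) \<le> rho * eps"
  proof -
    have "SP (\<lambda>x. (True,x) \<in> E \<and> x i = False) \<le> SP (\<lambda>x. x i = False)" by (rule SP_mono) auto
    thus ?thesis unfolding Pr_EC using E sN rho0 by simp
  qed
  have den: "Pr I rho eps par {w'. snd w' i = False} = rho * eps + (1 - rho)"
    unfolding Pr_C using sN by simp
  have dp: "rho * eps + (1 - rho) > 0" using rho0 rho1 eps0 by (smt (verit) mult_pos_pos)
  have "Pr I rho eps par (E \<inter> {w'. snd w' i = False}) / Pr I rho eps par {w'. snd w' i = False}
     \<le> rho * eps / (rho * eps + (1 - rho))" unfolding den using num dp by (simp add: divide_right_mono)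
  also have "\<dots> = q1 rho eps" unfolding q1_def by (simp add: algebra_simps)
  finally show False using b p by linarith
qed

lemma Db:
  assumes p: "q1 rho eps < p" and i: "i \<in> {1..I}" and pi: "par i \<noteq> 0"
    and E: "E \<subseteq> {w. snd w (par i)}" and w: "w \<in> belief_i I rho eps par p i E"
  shows "snd w i"
proof (rule ccontr)
  let ?j = "par i"
  have j: "?j \<in> {1..I}" using par_range[OF i] pi by auto
  assume "\<not> snd w i"
  hence b: "p \<le> Pr I rho eps par (E \<inter> {w'. snd w' i = False}) / Pr I rho eps par {w'. snd w' i = False}"
    using w unfolding belief_i_def by auto
  define a where "a = SP (\<lambda>x. x ?j)"
  have a0: "0 \<le> a" "a \<le> 1" unfolding a_def using SP_nonneg SP_Y(1)[OF j] eps0 by auto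
  have c: "SP (\<lambda>x. x ?j \<and> \<not> x i) = eps * a" unfolding a_def by (rule SP_child[OF i pi])
  have "SP (\<lambda>x. x i) = SP (\<lambda>x. x i \<and> x ?j) + SP (\<lambda>x. x i \<and> \<not> x ?j)" by (rule SP_split)
  also have "SP (\<lambda>x. x i \<and> \<not> x ?j) = 0" by (rule SP_child0[OF i pi])
  also have "SP (\<lambda>x. x i \<and> x ?j) = SP (\<lambda>x. x ?j \<and> x i)" by (rule SP_cong) auto
  finally have yi: "SP (\<lambda>x. x i) = SP (\<lambda>x. x ?j \<and> x i)" by simp
  have "a = SP (\<lambda>x. x ?j \<and> x i) + SP (\<lambda>x. x ?j \<and> \<not> x i)" unfolding a_def by (rule SP_split)
  hence yi2: "SP (\<lambda>x. x i) = (1 - eps) * a" using yi c by (simp add: algebra_simps)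
  have E0: "(False, \<lambda>_. False) \<notin> E" using E by auto
  have num: "Pr I rho eps par (E \<inter> {w'. snd w' i = False}) \<le> rho * eps * a"
  proof -
    have "SP (\<lambda>x. (True,x) \<in> E \<and> x i = False) \<le> SP (\<lambda>x. x ?j \<and> \<not> x i)" by (rule SP_mono) (use E in auto)
    thus ?thesis unfolding Pr_EC using E0 c rho0 by (simp add: mult.assoc)
  qed
  have den: "Pr I rho eps par {w'. snd w' i = False} = 1 - rho * (1 - eps) * a"
  proof -
    have sN: "SP (\<lambda>x. \<not> x i) = 1 - (1 - eps) * a" using SP_N[OF i] yi2 by simp
    have "rho * (1 - (1 - eps) * a) + (1 - rho) = 1 - rho * (1 - eps) * a" by (simp add: algebra_simps)
    thus ?thesis unfolding Pr_C using sN by simp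
  qed
  have dp: "1 - rho * (1 - eps) * a > 0"
  proof -
    have "rho * (1 - eps) * a \<le> rho * (1 - eps)" using a0 rho0 eps1 by (simp add: mult_left_le)
    thus ?thesis using den_pos by linarith
  qed
  have "Pr I rho eps par (E \<inter> {w'. snd w' i = False}) / Pr I rho eps par {w'. snd w' i = False}
     \<le> rho * eps * a / (1 - rho * (1 - eps) * a)" unfolding den using num dp by (simp add: divide_right_mono)
  also have "\<dots> \<le> q1 rho eps" unfolding q1_def by (rule arith2[OF a0])
  finally show False using b p by linarith
qed

lemma seed_ex: "\<exists>s\<in>{1..I}. par s = 0"
proof -
  define M where "M = Min (dep par ` {1..I})"
  have "M \<in> dep par ` {1..I}" unfolding M_def using I1 by simp
  then obtain s where s: "s \<in> {1..I}" "dep par s = M" by blast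
  have mn: "\<forall>k\<in>{1..I}. dep par s \<le> dep par k"
  proof
    fix k assume "k \<in> {1..I}"
    hence "M \<le> dep par k" unfolding M_def by (intro Min_le) auto
    thus "dep par s \<le> dep par k" using s(2) by simp
  qed
  show ?thesis
  proof (rule bexI[OF _ s(1)], rule ccontr)
    assume "par s \<noteq> 0"
    hence "par s \<in> {1..I}" "dep par (par s) < dep par s" using par_range[OF s(1)] dep_par[OF s(1)] by auto
    thus False using mn by force
  qed
qed

lemma Dc:
  assumes p: "q1 rho eps < p" and q: "q2 I eps \<le> q1 rho eps"
    and E: "E \<subseteq> {w. \<forall>k\<in>{1..I}. snd w k}"
  shows "belief I rho eps par p E = {}"
proof (rule ccontr)
  assume "belief I rho eps par p E \<noteq> {}"
  then obtain w where w: "w \<in> belief I rho eps par p E" by blast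
  obtain s where s: "s \<in> {1..I}" "par s = 0" using seed_ex by blast
  have ws: "w \<in> belief_i I rho eps par p s E" using w s unfolding belief_def by blast
  have E0: "(False, \<lambda>_. False) \<notin> E" using E s by auto
  have sw: "snd w s" by (rule Da[OF p s E0 ws])
  hence b: "p \<le> Pr I rho eps par (E \<inter> {w'. snd w' s = True}) / Pr I rho eps par {w'. snd w' s = True}"
    using ws unfolding belief_i_def by auto
  have num: "Pr I rho eps par (E \<inter> {w'. snd w' s = True}) \<le> rho * (1 - eps) ^ I"
  proof -
    have "SP (\<lambda>x. (True,x) \<in> E \<and> x s = True) \<le> (1 - eps) ^ I"
    proof (rule SP_le_xall)
      fix x assume x: "x \<in> XX" "(True, x) \<in> E \<and> x s = True"
      hence "\<forall>k\<in>{1..I}. x k" using E by auto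
      thus "x = xall" using x unfolding XX_def XS_def xall_def by auto
    qed
    thus ?thesis unfolding Pr_EC using rho0 by simp
  qed
  have den: "Pr I rho eps par {w'. snd w' s = True} = rho * (1 - eps)"
    unfolding Pr_C using SP_Y(2)[OF s] by simp
  have dp: "rho * (1 - eps) > 0" using rho0 eps1 by simp
  have "Pr I rho eps par (E \<inter> {w'. snd w' s = True}) / Pr I rho eps par {w'. snd w' s = True}
     \<le> rho * (1 - eps) ^ I / (rho * (1 - eps))" unfolding den by (rule divide_right_mono[OF num]) (use dp in linarith)
  also have "\<dots> = (1 - eps) ^ (I - 1)"
  proof -
    have "I = Suc (I - 1)" using I1 by simp
    hence "(1 - eps) ^ I = (1 - eps) * (1 - eps) ^ (I - 1)" by (metis power_Suc)
    thus ?thesis using dp rho0 eps1 by simp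
  qed
  also have "\<dots> = q2 I eps" unfolding q2_def ..
  finally show False using b p q by linarith
qed

theorem main1: assumes "p \<le> q1 rho eps"
  shows "common_belief I rho eps par p (eventG I) = Omega I"
proof -
  have "eventG I \<subseteq> (belief I rho eps par p ^^ l) (eventG I)" for l
  proof (induction l)
    case (Suc l)
    have "(belief I rho eps par p ^^ Suc l) (eventG I) = Omega I" using D1[OF assms Suc] by simp
    thus ?case unfolding eventG_def by auto
  qed simp
  hence "(belief I rho eps par p ^^ l) (eventG I) = Omega I" if "l \<in> {1..}" for l
    using that D1[OF assms] by (cases l) auto
  thus ?thesis unfolding common_belief_def by auto
qed

theorem main2: assumes p: "q1 rho eps < p" and q: "q2 I eps \<le> q1 rho eps"
  shows "common_belief I rho eps par p (eventG I) = {}"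
proof -
  define E where "E k = (belief I rho eps par p ^^ k) (eventG I)" for k
  obtain s where s: "s \<in> {1..I}" "par s = 0" using seed_ex by blast
  have inv: "(False, \<lambda>_. False) \<notin> E k \<and>
      (\<forall>i\<in>{1..I}. \<forall>m\<le>k. (par ^^ m) i = 0 \<longrightarrow> E k \<subseteq> {w. snd w i})" for k
  proof (induction k)
    case 0
    have "(False, \<lambda>_. False) \<notin> E 0" unfolding E_def eventG_def by simp
    moreover have "(par ^^ m) i \<noteq> 0" if "i \<in> {1..I}" "m \<le> 0" for i m using that by auto
    ultimately show ?case by blast
  next
    case (Suc k)
    have ES: "E (Suc k) = belief I rho eps par p (E k)" unfolding E_def by simp
    have E0: "(False, \<lambda>_. False) \<notin> E k" using Suc.IH by blast
    have seedY: "E (Suc k) \<subseteq> {w. snd w i}" if i: "i \<in> {1..I}" "par i = 0" for i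
    proof
      fix w assume "w \<in> E (Suc k)"
      hence "w \<in> belief_i I rho eps par p i (E k)" unfolding ES belief_def using i by blast
      thus "w \<in> {w. snd w i}" using Da[OF p i E0] by simp
    qed
    have "(False, \<lambda>_. False) \<notin> E (Suc k)" using seedY[OF s] by auto
    moreover have "E (Suc k) \<subseteq> {w. snd w i}" if i: "i \<in> {1..I}" and m: "m \<le> Suc k" "(par ^^ m) i = 0" for i m
    proof (cases m)
      case 0 thus ?thesis using i m by simp
    next
      case (Suc m')
      have pm: "(par ^^ m') (par i) = 0" using m Suc by (simp add: funpow_Suc_right del: funpow.simps)
      show ?thesis
      proof (cases "par i = 0")
        case True thus ?thesis using seedY i by blast
      next
        case False
        have j: "par i \<in> {1..I}" using par_range[OF i] False by auto
        have Ej: "E k \<subseteq> {w. snd w (par i)}" using Suc.IH j pm m Suc by auto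
        show ?thesis
        proof
          fix w assume "w \<in> E (Suc k)"
          hence "w \<in> belief_i I rho eps par p i (E k)" unfolding ES belief_def using i by blast
          thus "w \<in> {w. snd w i}" using Db[OF p i False Ej] by simp
        qed
      qed
    qed
    ultimately show ?case by blast
  qed
  define K where "K = (\<Sum>i\<in>{1..I}. dep par i)"
  have "E K \<subseteq> {w. \<forall>k\<in>{1..I}. snd w k}"
  proof -
    have "E K \<subseteq> {w. snd w i}" if i: "i \<in> {1..I}" for i
    proof -
      have "dep par i \<le> K" unfolding K_def using i by (intro member_le_sum) auto
      thus ?thesis using inv[of K] i dep_ex[OF i] by blast
    qed
    thus ?thesis by blast
  qed
  hence "E (Suc K) = {}" using Dc[OF p q] unfolding E_def by simp
  moreover have "common_belief I rho eps par p (eventG I) \<subseteq> E (Suc K)"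
    unfolding common_belief_def E_def by (intro INT_lower) simp
  ultimately show ?thesis by blast
qed

end

lemma q1_mono:
  fixes rho a b :: real
  assumes "0 < rho" "rho < 1" "0 < a" "a \<le> b" "b < 1"
  shows "q1 rho a \<le> q1 rho b"
proof -
  have da: "1 - rho * (1 - a) > 0"
  proof -
    have "rho * (1 - a) \<le> rho" using assms by (simp add: mult_left_le)
    thus ?thesis using assms by linarith
  qed
  have db: "1 - rho * (1 - b) > 0"
  proof -
    have "rho * (1 - b) \<le> rho" using assms by (simp add: mult_left_le)
    thus ?thesis using assms by linarith
  qed
  have "rho * a * (1 - rho * (1 - b)) \<le> rho * b * (1 - rho * (1 - a))"
  proof -
    have "rho * a * (1 - rho * (1 - b)) - rho * b * (1 - rho * (1 - a)) = rho * (1 - rho) * (a - b)"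
      by (simp add: algebra_simps)
    also have "\<dots> \<le> 0" using assms by (intro mult_nonneg_nonpos) auto
    finally show ?thesis by simp
  qed
  thus ?thesis unfolding q1_def using da db by (simp add: divide_simps)
qed

theorem proposition2:
  fixes I :: nat and rho eps epsbar :: real
  assumes "I \<ge> 2"
    and "0 < rho" "rho < 1"
    and "0 < eps" "eps < 1"
    and "0 < epsbar" "epsbar < 1" "q1 rho epsbar = q2 I epsbar"
    and "eps \<ge> epsbar"
  shows "\<forall>par p. info_tree I par \<longrightarrow>
           (p \<le> q1 rho eps \<longrightarrow> common_belief I rho eps par p (eventG I) = Omega I) \<and>
           (p > q1 rho eps \<longrightarrow> common_belief I rho eps par p (eventG I) = {})"
proof (intro allI impI)
  fix par and p :: real
  assume tree: "info_tree I par"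
  interpret tr I rho eps par using assms tree by unfold_locales auto
  have "q2 I eps \<le> q2 I epsbar"
    unfolding q2_def using assms by (intro power_mono) auto
  also have "\<dots> = q1 rho epsbar" using assms by simp
  also have "\<dots> \<le> q1 rho eps" using assms by (intro q1_mono) auto
  finally have q: "q2 I eps \<le> q1 rho eps" .
  show "(p \<le> q1 rho eps \<longrightarrow> common_belief I rho eps par p (eventG I) = Omega I) \<and>
           (p > q1 rho eps \<longrightarrow> common_belief I rho eps par p (eventG I) = {})"
    using main1 main2[OF _ q] by auto
qed

end
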